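(* For $n=1,2,\dots$ let $\Phi_{W^{(n)}}$ be a source pmf on countable $\mathcal W^{(n)}$, $\Phi_{U^{(n)}|W^{(n)}}$ a codebook distribution on countable $\mathcal U^{(n)}$, and $\Phi_{V^{(n)}|W^{(n)},U^{(n)}}$ a channel to countable $\mathcal V^{(n)}$. Let $\mathcal B^{(n)}=\{u^{(n)}(w)\}_{w\in\mathcal W^{(n)}}$ have independent entries with $u^{(n)}(w)\sim\Phi_{U^{(n)}|W^{(n)}=w}$, let $P_{V^{(n)}}(v)=\sum_w\Phi_{W^{(n)}}(w)\Phi_{V^{(n)}|W^{(n)},U^{(n)}}(v|w,u^{(n)}(w))$, and let $Q_{V^{(n)}}=\Phi_{V^{(n)}}$ be the $V^{(n)}$-marginal of $\Phi_{W^{(n)}}\Phi_{U^{(n)}|W^{(n)}}\Phi_{V^{(n)}|W^{(n)},U^{(n)}}$. If for every $\tau\in\mathbb R$, $\mathbf P_\Phi\big(i_\Phi(W^{(n)},U^{(n)};V^{(n)})-i_\Phi(W^{(n)})>\tau\big)\to0$ as $n\to\infty$, then $\lim_{n\to\infty}\mathbf E\|P_{V^{(n)}}-Q_{V^{(n)}}\|_{TV}=0$.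
   Context: Expectation is over the random codebook. $i_\Phi(w,u;v)=\log\frac{\Phi_{V|W,U}(v|w,u)}{\Phi_V(v)}$ and $i_\Phi(w)=\log\frac1{\Phi_W(w)}$, base 2. Total variation is half the $\ell_1$ distance. *)

theory Defs
  imports "HOL-Probability.Probability"
begin

definition tv_dist :: "'a pmf \<Rightarrow> 'a pmf \<Rightarrow> real" where
  "tv_dist p q = (1/2) * (\<Sum>\<^sub>\<infinity> x. \<bar>pmf p x - pmf q x\<bar>)"

definition induced_out :: "'w pmf \<Rightarrow> ('w \<Rightarrow> 'u \<Rightarrow> 'v pmf) \<Rightarrow> ('w \<Rightarrow> 'u) \<Rightarrow> 'v pmf" where
  "induced_out PW ch c = bind_pmf PW (\<lambda>w. ch w (c w))"

definition joint_pmf :: "'w pmf \<Rightarrow> ('w \<Rightarrow> 'u pmf) \<Rightarrow> ('w \<Rightarrow> 'u \<Rightarrow> 'v pmf) \<Rightarrow> ('w \<times> 'u \<times> 'v) pmf" where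
  "joint_pmf PW PU ch = bind_pmf PW (\<lambda>w. bind_pmf (PU w) (\<lambda>u. map_pmf (\<lambda>v. (w, u, v)) (ch w u)))"

definition target_out :: "'w pmf \<Rightarrow> ('w \<Rightarrow> 'u pmf) \<Rightarrow> ('w \<Rightarrow> 'u \<Rightarrow> 'v pmf) \<Rightarrow> 'v pmf" where
  "target_out PW PU ch = map_pmf (\<lambda>(w, u, v). v) (joint_pmf PW PU ch)"

definition info_dens_cond :: "'w pmf \<Rightarrow> ('w \<Rightarrow> 'u pmf) \<Rightarrow> ('w \<Rightarrow> 'u \<Rightarrow> 'v pmf) \<Rightarrow> 'w \<Rightarrow> 'u \<Rightarrow> 'v \<Rightarrow> real" where
  "info_dens_cond PW PU ch w u v = log 2 (pmf (ch w u) v / pmf (target_out PW PU ch) v)"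

definition info_dens_src :: "'w pmf \<Rightarrow> 'w \<Rightarrow> real" where
  "info_dens_src PW w = log 2 (1 / pmf PW w)"

definition codebook_measure :: "('w \<Rightarrow> 'u pmf) \<Rightarrow> ('w \<Rightarrow> 'u) measure" where
  "codebook_measure PU = PiM UNIV (\<lambda>w. measure_pmf (PU w))"

end

theory Submission
  imports Defs
begin


lemma PiM_Pi_pmf:
  fixes p :: "'i \<Rightarrow> 'a pmf"
  assumes fin: "finite I"
  shows "distr (measure_pmf (Pi_pmf I d p)) (PiM I (\<lambda>i. measure_pmf (p i))) (\<lambda>x. restrict x I)
         = PiM I (\<lambda>i. measure_pmf (p i))"
proof (rule product_sigma_finite.PiM_eqI)
  show "product_sigma_finite (\<lambda>i. measure_pmf (p i))"
    by (simp add: product_sigma_finite.intro measure_pmf.sigma_finite_measure_axioms)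
  show "finite I" by fact
  show "sets (distr (measure_pmf (Pi_pmf I d p)) (PiM I (\<lambda>i. measure_pmf (p i))) (\<lambda>x. restrict x I)) = sets (PiM I (\<lambda>i. measure_pmf (p i)))"
    by simp
next
  fix A assume A: "\<And>i. i \<in> I \<Longrightarrow> A i \<in> sets (measure_pmf (p i))"
  have "Pi\<^sub>E I A \<in> sets (Pi\<^sub>M I (\<lambda>i. measure_pmf (p i)))"
    using A by (intro sets_PiM_I_finite fin) auto
  hence "emeasure (distr (measure_pmf (Pi_pmf I d p)) (Pi\<^sub>M I (\<lambda>i. measure_pmf (p i)))
          (\<lambda>x. restrict x I)) (Pi\<^sub>E I A) =
         emeasure (measure_pmf (Pi_pmf I d p)) ((\<lambda>x. restrict x I) -` Pi\<^sub>E I A)"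
    by (subst emeasure_distr) (auto simp: space_PiM)
  also have "\<dots> = emeasure (measure_pmf (Pi_pmf I d p)) (PiE_dflt I d A)"
    by (intro emeasure_eq_AE AE_pmfI) (auto simp: PiE_dflt_def set_Pi_pmf fin)
  also have "\<dots> = (\<Prod>i\<in>I. emeasure (measure_pmf (p i)) (A i))"
    by (simp add: measure_pmf.emeasure_eq_measure measure_Pi_pmf_PiE_dflt fin prod_ennreal)
  finally show "emeasure (distr (measure_pmf (Pi_pmf I d p)) (Pi\<^sub>M I (\<lambda>i. measure_pmf (p i)))
          (\<lambda>x. restrict x I)) (Pi\<^sub>E I A) = (\<Prod>i\<in>I. emeasure (measure_pmf (p i)) (A i))" .
qed

lemma transfer_PiM:
  fixes p :: "'i \<Rightarrow> 'a pmf" and G :: "('i \<Rightarrow> 'a) \<Rightarrow> ennreal"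
  assumes fin: "finite I"
    and Gm: "G \<in> borel_measurable (PiM I (\<lambda>i. measure_pmf (p i)))"
  shows "(\<integral>\<^sup>+ c. G (restrict c I) \<partial>PiM UNIV (\<lambda>i. measure_pmf (p i)))
       = (\<integral>\<^sup>+ x. G (restrict x I) \<partial>measure_pmf (Pi_pmf I d p))"
proof -
  interpret product_prob_space "\<lambda>i. measure_pmf (p i)" UNIV
    by (simp add: product_prob_space_def product_prob_space_axioms_def product_sigma_finite_def
        measure_pmf.sigma_finite_measure_axioms measure_pmf.prob_space_axioms)
  have r1: "(\<lambda>x. restrict x I) \<in> measurable (PiM UNIV (\<lambda>i. measure_pmf (p i))) (PiM I (\<lambda>i. measure_pmf (p i)))"
    by (rule measurable_restrict_subset) simp
  have r2: "(\<lambda>x. restrict x I) \<in> measurable (measure_pmf (Pi_pmf I d p)) (PiM I (\<lambda>i. measure_pmf (p i)))"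
    by (simp add: space_PiM)
  have "(\<integral>\<^sup>+ c. G (restrict c I) \<partial>PiM UNIV (\<lambda>i. measure_pmf (p i)))
     = (\<integral>\<^sup>+ y. G y \<partial>distr (PiM UNIV (\<lambda>i. measure_pmf (p i))) (PiM I (\<lambda>i. measure_pmf (p i))) (\<lambda>x. restrict x I))"
    using Gm by (subst nn_integral_distr[OF r1]) auto
  also have "\<dots> = (\<integral>\<^sup>+ y. G y \<partial>PiM I (\<lambda>i. measure_pmf (p i)))"
    using distr_PiM_restrict_finite[OF fin] by simp
  also have "\<dots> = (\<integral>\<^sup>+ y. G y \<partial>distr (measure_pmf (Pi_pmf I d p)) (PiM I (\<lambda>i. measure_pmf (p i))) (\<lambda>x. restrict x I))"
    by (simp only: PiM_Pi_pmf[OF fin, of d p])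
  also have "\<dots> = (\<integral>\<^sup>+ x. G (restrict x I) \<partial>measure_pmf (Pi_pmf I d p))"
    using Gm by (subst nn_integral_distr[OF r2]) auto
  finally show ?thesis .
qed



lemma pmf_int_bounded:
  fixes f :: "'a \<Rightarrow> real"
  assumes "\<And>x. \<bar>f x\<bar> \<le> B"
  shows "integrable (measure_pmf M) f"
  by (rule measure_pmf.integrable_const_bound[where B=B]) (use assms in auto)

lemma abs_exp_le_sqrt:
  fixes Y :: "'a \<Rightarrow> real"
  assumes "\<And>x. \<bar>Y x\<bar> \<le> B"
  shows "measure_pmf.expectation M (\<lambda>x. \<bar>Y x\<bar>) \<le> sqrt (measure_pmf.expectation M (\<lambda>x. (Y x)^2))"
proof -
  have i1: "integrable (measure_pmf M) (\<lambda>x. \<bar>Y x\<bar>)"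
    by (rule pmf_int_bounded[where B=B]) (use assms in auto)
  have i2: "integrable (measure_pmf M) (\<lambda>x. \<bar>Y x\<bar>^2)"
    by (rule pmf_int_bounded[where B="B^2"]) (metis assms abs_ge_zero abs_of_nonneg power2_abs power_mono zero_le_power2)
  have "0 \<le> measure_pmf.variance M (\<lambda>x. \<bar>Y x\<bar>)"
    by (rule Bochner_Integration.integral_nonneg) auto
  also have "\<dots> = measure_pmf.expectation M (\<lambda>x. (Y x)^2) - (measure_pmf.expectation M (\<lambda>x. \<bar>Y x\<bar>))^2"
    using measure_pmf.variance_eq[OF i1 i2] by simp
  finally have "(measure_pmf.expectation M (\<lambda>x. \<bar>Y x\<bar>))^2 \<le> measure_pmf.expectation M (\<lambda>x. (Y x)^2)"
    by simp
  moreover have "0 \<le> measure_pmf.expectation M (\<lambda>x. \<bar>Y x\<bar>)" by (rule Bochner_Integration.integral_nonneg) auto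
  ultimately show ?thesis
    by (metis real_sqrt_abs real_sqrt_le_mono abs_of_nonneg)
qed

lemma prod_two:
  fixes g h :: "'i \<Rightarrow> 'b::comm_monoid_mult"
  assumes "finite F" "w \<in> F" "w' \<in> F" "w \<noteq> w'"
  shows "(\<Prod>z\<in>F. if z = w then g z else if z = w' then h z else 1) = g w * h w'"
proof -
  have "(\<Prod>z\<in>F. if z = w then g z else if z = w' then h z else 1)
     = (\<Prod>z\<in>{w,w'}. if z = w then g z else if z = w' then h z else 1)"
    by (rule prod.mono_neutral_right) (use assms in auto)
  also have "\<dots> = g w * h w'" using assms by simp
  finally show ?thesis .
qed



lemma comp_exp:
  fixes g :: "'a \<Rightarrow> real"
  assumes "finite F" "w \<in> F"
  shows "measure_pmf.expectation (Pi_pmf F d p) (\<lambda>x. g (x w)) = measure_pmf.expectation (p w) g"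
proof -
  have "p w = map_pmf (\<lambda>f. f w) (Pi_pmf F d p)" using assms by (simp add: Pi_pmf_component)
  then show ?thesis by simp
qed

lemma pair_exp:
  fixes g h :: "'a \<Rightarrow> real"
  assumes fin: "finite F" and w: "w \<in> F" "w' \<in> F" "w \<noteq> w'"
    and g: "\<And>v. 0 \<le> g v" "\<And>v. g v \<le> B" and h: "\<And>v. 0 \<le> h v" "\<And>v. h v \<le> B"
  shows "measure_pmf.expectation (Pi_pmf F d p) (\<lambda>x. g (x w) * h (x w'))
       = measure_pmf.expectation (p w) g * measure_pmf.expectation (p w') h"
proof -
  define f where "f = (\<lambda>z v. if z = w then g v else if z = w' then h v else 1)"
  have "measure_pmf.expectation (Pi_pmf F d p) (\<lambda>y. \<Prod>z\<in>F. f z (y z)) =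
             (\<Prod>z\<in>F. measure_pmf.expectation (p z) (\<lambda>v. f z v))"
  proof (rule expectation_prod_Pi_pmf[OF fin])
    fix z assume "z \<in> F"
    show "integrable (measure_pmf (p z)) (f z)"
    proof (rule pmf_int_bounded[where B="B+1"])
      fix v
      have "0 \<le> g v" "g v \<le> B" "0 \<le> h v" "h v \<le> B" using g h by auto
      then show "\<bar>f z v\<bar> \<le> B + 1" by (auto simp: f_def)
    qed
  next
    fix z y show "0 \<le> f z y" using g h by (auto simp: f_def)
  qed
  moreover have "(\<lambda>y. \<Prod>z\<in>F. f z (y z)) = (\<lambda>x. g (x w) * h (x w'))"
  proof
    fix y
    have "(\<Prod>z\<in>F. f z (y z)) = (\<Prod>z\<in>F. if z = w then g (y z) else if z = w' then h (y z) else 1)"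
      by (simp add: f_def)
    also have "\<dots> = g (y w) * h (y w')"
      by (rule prod_two[OF fin w, where g = "\<lambda>z. g (y z)" and h = "\<lambda>z. h (y z)"])
    finally show "(\<Prod>z\<in>F. f z (y z)) = g (y w) * h (y w')" .
  qed
  moreover have "(\<Prod>z\<in>F. measure_pmf.expectation (p z) (\<lambda>v. f z v))
     = (\<Prod>z\<in>F. if z = w then measure_pmf.expectation (p z) g else if z = w' then measure_pmf.expectation (p z) h else 1)"
    by (rule prod.cong) (auto simp: f_def)
  moreover have "\<dots> = measure_pmf.expectation (p w) g * measure_pmf.expectation (p w') h"
    by (rule prod_two[OF fin w])
  ultimately show ?thesis by simp
qed



lemma core_pmf:
  fixes a :: "'i \<Rightarrow> 'a \<Rightarrow> real"
  assumes fin: "finite F" and a0: "\<And>w u. 0 \<le> a w u" and aK: "\<And>w u. a w u \<le> K"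
  shows "measure_pmf.expectation (Pi_pmf F d p)
           (\<lambda>x. \<bar>(\<Sum>w\<in>F. a w (x w)) - (\<Sum>w\<in>F. measure_pmf.expectation (p w) (a w))\<bar>)
         \<le> sqrt (K * (\<Sum>w\<in>F. measure_pmf.expectation (p w) (a w)))"
proof -
  define P where "P = Pi_pmf F d p"
  define E where "E = (\<lambda>w. measure_pmf.expectation (p w) (a w))"
  define m where "m = (\<Sum>w\<in>F. E w)"
  define X where "X = (\<lambda>x. \<Sum>w\<in>F. a w (x w))"
  have K0: "0 \<le> K" using a0 aK order_trans by blast
  have E0: "0 \<le> E w" for w unfolding E_def by (rule Bochner_Integration.integral_nonneg) (use a0 in auto)
  have m0: "0 \<le> m" unfolding m_def by (rule sum_nonneg) (use E0 in auto)
  have X0: "0 \<le> X x" for x unfolding X_def by (rule sum_nonneg) (use a0 in auto)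
  have XB: "X x \<le> real (card F) * K" for x
    unfolding X_def using sum_bounded_above[of F "\<lambda>w. a w (x w)" K] aK by auto
  have intb: "integrable (measure_pmf M) f" if "\<And>x. \<bar>f x\<bar> \<le> B" for M and f :: "_ \<Rightarrow> real" and B
    using that by (rule pmf_int_bounded)
  have ia: "integrable (measure_pmf M) (\<lambda>x. a w (g x))" for M w g
    by (rule pmf_int_bounded[where B=K]) (use a0 aK in auto)
  have iaa: "integrable (measure_pmf M) (\<lambda>x. a w (g x) * a w' (h x))" for M w w' g h
  proof (rule pmf_int_bounded[where B="K*K"])
    fix x show "\<bar>a w (g x) * a w' (h x)\<bar> \<le> K * K"
      using a0[of w "g x"] a0[of w' "h x"] aK[of w "g x"] aK[of w' "h x"] by (simp add: abs_mult mult_mono)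
  qed
  have EX: "measure_pmf.expectation P X = m"
    unfolding X_def P_def m_def E_def
    by (subst Bochner_Integration.integral_sum) (auto intro!: ia sum.cong comp_exp fin)
  have term_bd: "measure_pmf.expectation P (\<lambda>x. a w (x w) * a w' (x w'))
      \<le> (if w = w' then K * E w else 0) + E w * E w'" if "w \<in> F" "w' \<in> F" for w w'
  proof (cases "w = w'")
    case True
    have "measure_pmf.expectation P (\<lambda>x. a w (x w) * a w' (x w'))
        = measure_pmf.expectation (p w) (\<lambda>u. a w u * a w u)"
      unfolding P_def using True comp_exp[OF fin that(1), where g="\<lambda>u. a w u * a w u" and d=d and p=p] by simp
    also have "\<dots> \<le> measure_pmf.expectation (p w) (\<lambda>u. K * a w u)"
    proof (rule Bochner_Integration.integral_mono)
      show "integrable (measure_pmf (p w)) (\<lambda>u. a w u * a w u)"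
      proof (rule pmf_int_bounded[where B="K*K"])
        fix x show "\<bar>a w x * a w x\<bar> \<le> K * K" using a0[of w x] aK[of w x] by (simp add: abs_mult mult_mono)
      qed
      show "integrable (measure_pmf (p w)) (\<lambda>u. K * a w u)"
      proof (rule pmf_int_bounded[where B="K*K"])
        fix x show "\<bar>K * a w x\<bar> \<le> K * K" using a0[of w x] aK[of w x] K0 by (simp add: abs_mult mult_mono)
      qed
      fix u show "a w u * a w u \<le> K * a w u" by (rule mult_right_mono[OF aK a0])
    qed
    also have "\<dots> = K * E w" unfolding E_def by simp
    finally show ?thesis using True E0[of w'] by (simp add: add_increasing2)
  next
    case False
    have "measure_pmf.expectation P (\<lambda>x. a w (x w) * a w' (x w')) = E w * E w'"
      unfolding P_def E_def by (rule pair_exp[OF fin that False, where B=K]) (auto intro: a0 aK)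
    then show ?thesis using False by simp
  qed
  have EX2: "measure_pmf.expectation P (\<lambda>x. (X x)^2) \<le> K * m + m^2"
  proof -
    have "measure_pmf.expectation P (\<lambda>x. (X x)^2)
        = measure_pmf.expectation P (\<lambda>x. \<Sum>w\<in>F. \<Sum>w'\<in>F. a w (x w) * a w' (x w'))"
      unfolding X_def power2_eq_square sum_product ..
    also have "\<dots> = (\<Sum>w\<in>F. \<Sum>w'\<in>F. measure_pmf.expectation P (\<lambda>x. a w (x w) * a w' (x w')))"
      by (subst Bochner_Integration.integral_sum, rule Bochner_Integration.integrable_sum, rule iaa)
         (subst Bochner_Integration.integral_sum, auto intro!: iaa)
    also have "\<dots> \<le> (\<Sum>w\<in>F. \<Sum>w'\<in>F. (if w = w' then K * E w else 0) + E w * E w')"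
      by (intro sum_mono term_bd)
    also have "\<dots> = K * m + m^2"
      using fin by (simp add: sum.distrib m_def sum_distrib_left power2_eq_square sum_product sum_distrib_right mult.commute)
    finally show ?thesis .
  qed
  have iX: "integrable (measure_pmf P) X"
    by (rule pmf_int_bounded[where B="real (card F) * K"]) (use X0 XB in auto)
  have iX2: "integrable (measure_pmf P) (\<lambda>x. (X x)^2)"
  proof (rule pmf_int_bounded[where B="(real (card F) * K)^2"])
    fix x show "\<bar>(X x)^2\<bar> \<le> (real (card F) * K)^2" using X0 XB by (simp add: power_mono)
  qed
  have "measure_pmf.expectation P (\<lambda>x. \<bar>X x - m\<bar>) \<le> sqrt (measure_pmf.expectation P (\<lambda>x. (X x - m)^2))"
  proof (rule abs_exp_le_sqrt[where B="real (card F) * K + m"])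
    fix x show "\<bar>X x - m\<bar> \<le> real (card F) * K + m" using X0[of x] XB[of x] m0 by linarith
  qed
  also have "measure_pmf.expectation P (\<lambda>x. (X x - m)^2) = measure_pmf.expectation P (\<lambda>x. (X x)^2) - m^2"
    using measure_pmf.variance_eq[OF iX iX2] EX by simp
  also have "sqrt (\<dots>) \<le> sqrt (K * m)" using EX2 by simp
  finally show ?thesis unfolding P_def X_def m_def E_def .
qed



lemma core_PiM:
  fixes a :: "'i \<Rightarrow> 'a \<Rightarrow> real" and p :: "'i \<Rightarrow> 'a pmf"
  assumes fin: "finite F" and a0: "\<And>w u. 0 \<le> a w u" and aK: "\<And>w u. a w u \<le> K"
  shows "(\<integral>\<^sup>+ c. ennreal \<bar>(\<Sum>w\<in>F. a w (c w)) - (\<Sum>w\<in>F. measure_pmf.expectation (p w) (a w))\<bar>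
            \<partial>PiM UNIV (\<lambda>w. measure_pmf (p w)))
         \<le> ennreal (sqrt (K * (\<Sum>w\<in>F. measure_pmf.expectation (p w) (a w))))"
proof -
  define m where "m = (\<Sum>w\<in>F. measure_pmf.expectation (p w) (a w))"
  define G where "G = (\<lambda>y. ennreal \<bar>(\<Sum>w\<in>F. a w (y w)) - m\<bar>)"
  have GR: "G (restrict c F) = G c" for c unfolding G_def by (simp add: restrict_def)
  have comp: "(\<lambda>y. a w (y w)) \<in> borel_measurable (PiM F (\<lambda>i. measure_pmf (p i)))" if "w \<in> F" for w
    by (rule measurable_compose[OF measurable_component_singleton[OF that]]) simp
  have Gm: "G \<in> borel_measurable (PiM F (\<lambda>i. measure_pmf (p i)))"
    unfolding G_def
    by (intro measurable_compose[OF _ measurable_ennreal] borel_measurable_abs borel_measurable_diff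
        borel_measurable_sum comp borel_measurable_const)
  have "(\<integral>\<^sup>+ c. G c \<partial>PiM UNIV (\<lambda>w. measure_pmf (p w)))
      = (\<integral>\<^sup>+ c. G (restrict c F) \<partial>PiM UNIV (\<lambda>w. measure_pmf (p w)))" by (simp add: GR)
  also have "\<dots> = (\<integral>\<^sup>+ x. G (restrict x F) \<partial>measure_pmf (Pi_pmf F undefined p))"
    by (rule transfer_PiM[OF fin Gm])
  also have "\<dots> = (\<integral>\<^sup>+ x. ennreal \<bar>(\<Sum>w\<in>F. a w (x w)) - m\<bar> \<partial>measure_pmf (Pi_pmf F undefined p))"
    by (simp add: GR G_def)
  also have "\<dots> = ennreal (measure_pmf.expectation (Pi_pmf F undefined p) (\<lambda>x. \<bar>(\<Sum>w\<in>F. a w (x w)) - m\<bar>))"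
  proof (rule nn_integral_eq_integral)
    show "integrable (measure_pmf (Pi_pmf F undefined p)) (\<lambda>x. \<bar>(\<Sum>w\<in>F. a w (x w)) - m\<bar>)"
    proof (rule pmf_int_bounded[where B="real (card F) * K + \<bar>m\<bar>"])
      fix x
      have "\<bar>\<Sum>w\<in>F. a w (x w)\<bar> \<le> real (card F) * K"
        using sum_bounded_above[of F "\<lambda>w. a w (x w)" K] aK sum_nonneg[of F "\<lambda>w. a w (x w)"] a0 by auto
      then show "\<bar>\<bar>(\<Sum>w\<in>F. a w (x w)) - m\<bar>\<bar> \<le> real (card F) * K + \<bar>m\<bar>" by linarith
    qed
  qed auto
  also have "\<dots> \<le> ennreal (sqrt (K * m))"
    unfolding m_def by (rule ennreal_leI, rule core_pmf[OF fin a0 aK])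
  finally show ?thesis unfolding G_def m_def .
qed



lemma pmf_summable_on: "pmf p summable_on A"
proof -
  have "Infinite_Sum.abs_summable_on (pmf p) A"
    using abs_summable_equivalent pmf_abs_summable by blast
  then show ?thesis by (simp add: abs_summable_summable)
qed

lemma pmf_infsum: "infsum (pmf p) A = measure_pmf.prob p A"
  by (simp add: measure_pmf_conv_infsetsum infsetsum_infsum pmf_abs_summable)

lemma tv_le:
  fixes p q :: "'a pmf"
  assumes fin: "finite Vs"
  shows "tv_dist p q \<le> (\<Sum>v\<in>Vs. max 0 (pmf q v - pmf p v)) + measure_pmf.prob q (- Vs)"
proof -
  define h where "h = (\<lambda>v. max 0 (pmf q v - pmf p v))"
  have sp: "pmf p summable_on A" and sq: "pmf q summable_on A" for A by (rule pmf_summable_on)+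
  have hs: "h summable_on A" for A
    by (rule summable_on_comparison_test[OF sq]) (auto simp: h_def)
  have d: "(\<lambda>v. pmf p v - pmf q v) summable_on UNIV"
    using summable_on_add[OF sp summable_on_cmult_right[OF sq, of "-1"]] by simp
  have "infsum (\<lambda>v. pmf p v + (-1) * pmf q v) UNIV = infsum (pmf p) UNIV + infsum (\<lambda>v. (-1) * pmf q v) UNIV"
    by (rule infsum_add[OF sp summable_on_cmult_right[OF sq]])
  also have "\<dots> = 0" using infsum_cmult_right[OF sq, of "-1" UNIV] by (simp add: pmf_infsum del: mult_minus_left mult_1)
  finally have d0: "infsum (\<lambda>v. pmf p v - pmf q v) UNIV = 0" by simp
  have "infsum (\<lambda>v. \<bar>pmf p v - pmf q v\<bar>) UNIV = infsum (\<lambda>v. (pmf p v - pmf q v) + 2 * h v) UNIV"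
    by (rule infsum_cong) (auto simp: h_def abs_if max_def)
  also have "\<dots> = 2 * infsum h UNIV"
    using infsum_add[OF d summable_on_cmult_right[OF hs]] d0 infsum_cmult_right[OF hs] by simp
  finally have tv: "tv_dist p q = infsum h UNIV" unfolding tv_dist_def by simp
  have "infsum h UNIV = infsum h Vs + infsum h (- Vs)"
    using infsum_Un_disjoint[OF hs hs, of Vs "- Vs"] by (simp add: Un_commute)
  also have "infsum h (- Vs) \<le> infsum (pmf q) (- Vs)"
    by (rule infsum_mono[OF hs sq]) (auto simp: h_def)
  also have "infsum (pmf q) (- Vs) = measure_pmf.prob q (- Vs)" by (rule pmf_infsum)
  finally show ?thesis using tv fin by (simp add: h_def)
qed


lemma finite_approx:
  fixes M :: "'a pmf"
  assumes "0 < \<delta>"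
  shows "\<exists>F. finite F \<and> measure_pmf.prob M (- F) \<le> \<delta>"
proof -
  obtain F where F: "finite F" "dist (sum (pmf M) F) (infsum (pmf M) UNIV) \<le> \<delta>"
    using infsum_finite_approximation[OF pmf_summable_on[of M UNIV] assms] by blast
  have "infsum (pmf M) UNIV = 1" by (simp add: pmf_infsum)
  moreover have "sum (pmf M) F = measure_pmf.prob M F" using F(1) by (simp add: measure_measure_pmf_finite)
  moreover have "measure_pmf.prob M (- F) = 1 - measure_pmf.prob M F"
    using measure_pmf.prob_compl[of F M] by (simp add: Compl_eq_Diff_UNIV)
  ultimately have "measure_pmf.prob M (- F) \<le> \<delta>" using F(2) by (simp add: dist_real_def)
  with F(1) show ?thesis by blast
qed



lemma emeasure_joint:
  "emeasure (joint_pmf PW PU ch) S = (\<integral>\<^sup>+w. \<integral>\<^sup>+u. emeasure (ch w u) {v. (w,u,v) \<in> S} \<partial>PU w \<partial>PW)"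
  unfolding joint_pmf_def by (simp add: vimage_def)

lemma emeasure_joint_slice:
  "emeasure (joint_pmf PW PU ch) {(w,u,v'). v' = v \<and> R w u} =
   (\<integral>\<^sup>+w. \<integral>\<^sup>+u. ennreal (if R w u then pmf (ch w u) v else 0) \<partial>PU w \<partial>PW)"
proof -
  have "emeasure (ch w u) {v'. (w, u, v') \<in> {(w,u,v'). v' = v \<and> R w u}} = ennreal (if R w u then pmf (ch w u) v else 0)" for w u
    by (cases "R w u") (auto simp: emeasure_pmf_single)
  then show ?thesis unfolding emeasure_joint by simp
qed

lemma nn_F:
  fixes g :: "'a \<Rightarrow> ennreal"
  assumes "finite F"
  shows "(\<integral>\<^sup>+w. (if w \<in> F then g w else 0) \<partial>measure_pmf PW) = (\<Sum>w\<in>F. g w * pmf PW w)"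
  by (subst nn_integral_measure_pmf_support[OF assms]) auto


lemma target_bind: "target_out PW PU ch = bind_pmf PW (\<lambda>w. bind_pmf (PU w) (ch w))"
  unfolding target_out_def joint_pmf_def map_bind_pmf
  by (simp add: pmf.map_comp o_def)


lemma pmf_target_joint: "pmf (target_out PW PU ch) v = measure_pmf.prob (joint_pmf PW PU ch) {(w,u,v'). v' = v}"
  unfolding target_out_def pmf_map by (rule arg_cong[where f="measure_pmf.prob _"]) auto

lemma fst_joint: "map_pmf fst (joint_pmf PW PU ch) = PW"
  unfolding joint_pmf_def map_bind_pmf by (simp add: pmf.map_comp o_def bind_return_pmf')

lemma pmf_induced: "ennreal (pmf (induced_out PW ch c) v) = (\<integral>\<^sup>+w. ennreal (pmf (ch w (c w)) v) \<partial>PW)"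
  unfolding induced_out_def by (simp flip: emeasure_pmf_single)



lemma log_gt:
  fixes pw c q \<tau> :: real
  assumes "0 < pw" "0 < c" "0 < q" "2 powr \<tau> * q < pw * c"
  shows "\<tau> < log 2 (c / q) - log 2 (1 / pw)"
proof -
  have "log 2 (c / q) - log 2 (1 / pw) = log 2 ((c / q) / (1 / pw))"
    using assms by (simp add: log_divide_pos log_mult)
  also have "(c / q) / (1 / pw) = pw * c / q" by simp
  finally have e: "log 2 (c / q) - log 2 (1 / pw) = log 2 (pw * c / q)" .
  have "2 powr \<tau> < pw * c / q" using assms by (simp add: pos_less_divide_eq)
  then have "\<tau> < log 2 (pw * c / q)"
    using assms by (subst less_log_iff) auto
  then show ?thesis using e by simp
qed

lemma meas_abs_sum:
  fixes a :: "'i \<Rightarrow> 'a \<Rightarrow> real" and p :: "'i \<Rightarrow> 'a pmf"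
  shows "(\<lambda>c. ennreal \<bar>(\<Sum>w\<in>F. a w (c w)) - m\<bar>) \<in> borel_measurable (PiM UNIV (\<lambda>w. measure_pmf (p w)))"
proof -
  have comp: "(\<lambda>y. a w (y w)) \<in> borel_measurable (PiM UNIV (\<lambda>i. measure_pmf (p i)))" for w
    by (rule measurable_compose[OF measurable_component_singleton]) simp_all
  show ?thesis
    by (intro measurable_compose[OF _ measurable_ennreal] borel_measurable_abs borel_measurable_diff
        borel_measurable_sum comp borel_measurable_const)
qed

lemma codebook_prob: "prob_space (codebook_measure PU)"
proof -
  interpret product_prob_space "\<lambda>w. measure_pmf (PU w)" UNIV
    by (simp add: product_prob_space_def product_prob_space_axioms_def product_sigma_finite_def
        measure_pmf.sigma_finite_measure_axioms measure_pmf.prob_space_axioms)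
  show ?thesis unfolding codebook_measure_def by (rule P.prob_space_axioms)
qed


lemma bound_n:
  fixes PW :: "'w pmf" and PU :: "'w \<Rightarrow> 'u pmf" and ch :: "'w \<Rightarrow> 'u \<Rightarrow> 'v pmf"
  assumes \<delta>: "0 < \<delta>"
  shows "(\<integral>\<^sup>+ c. ennreal (tv_dist (induced_out PW ch c) (target_out PW PU ch)) \<partial>codebook_measure PU)
     \<le> ennreal (measure_pmf.prob (joint_pmf PW PU ch)
          {(w, u, v). info_dens_cond PW PU ch w u v - info_dens_src PW w > \<tau>} + 2 * \<delta> + sqrt (2 powr \<tau>))"
proof -
  define J where "J = joint_pmf PW PU ch"
  define Q where "Q = target_out PW PU ch"
  define \<kappa> :: real where "\<kappa> = 2 powr \<tau>"
  define \<epsilon> where "\<epsilon> = measure_pmf.prob J {(w, u, v). info_dens_cond PW PU ch w u v - info_dens_src PW w > \<tau>}"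
  have \<kappa>0: "0 < \<kappa>" unfolding \<kappa>_def by simp
  obtain F where F: "finite F" "measure_pmf.prob PW (- F) \<le> \<delta>" using finite_approx[OF \<delta>] by blast
  obtain Vs where Vs: "finite Vs" "measure_pmf.prob Q (- Vs) \<le> \<delta>" using finite_approx[OF \<delta>] by blast
  define tp where "tp = (\<lambda>w u v. pmf PW w * pmf (ch w u) v \<le> \<kappa> * pmf Q v)"
  define a where "a = (\<lambda>v w u. if tp w u v then pmf PW w * pmf (ch w u) v else 0)"
  define m where "m = (\<lambda>v. \<Sum>w\<in>F. measure_pmf.expectation (PU w) (a v w))"
  define X where "X = (\<lambda>v c. \<Sum>w\<in>F. a v w (c w))"
  define S1 where "S1 = (\<lambda>v. {(w, u, v'). v' = v \<and> (w \<in> F \<and> tp w u v)})"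
  define S2 where "S2 = (\<lambda>v. {(w, u, v'). v' = v \<and> \<not> (w \<in> F \<and> tp w u v)})"
  have a0: "0 \<le> a v w u" for v w u unfolding a_def by auto
  have aK: "a v w u \<le> \<kappa> * pmf Q v" for v w u
    unfolding a_def tp_def using \<kappa>0 by auto
  have aE: "ennreal (measure_pmf.expectation (PU w) (a v w)) =
      (\<integral>\<^sup>+u. ennreal (if tp w u v then pmf (ch w u) v else 0) \<partial>PU w) * ennreal (pmf PW w)" for v w
  proof -
    have "ennreal (measure_pmf.expectation (PU w) (a v w)) = (\<integral>\<^sup>+u. ennreal (a v w u) \<partial>PU w)"
    proof (rule nn_integral_eq_integral[symmetric])
      show "integrable (measure_pmf (PU w)) (a v w)"
        by (rule pmf_int_bounded[where B="\<kappa> * pmf Q v"]) (use a0 aK in auto)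
    qed (auto simp: a0)
    also have "\<dots> = (\<integral>\<^sup>+u. ennreal (if tp w u v then pmf (ch w u) v else 0) * ennreal (pmf PW w) \<partial>PU w)"
      by (rule nn_integral_cong) (auto simp: a_def ennreal_mult' mult.commute)
    also have "\<dots> = (\<integral>\<^sup>+u. ennreal (if tp w u v then pmf (ch w u) v else 0) \<partial>PU w) * ennreal (pmf PW w)"
      by (rule nn_integral_multc) simp
    finally show ?thesis .
  qed
  have m0: "0 \<le> m v" for v
    unfolding m_def by (auto intro!: sum_nonneg Bochner_Integration.integral_nonneg simp: a0)
  have m_eq: "m v = measure_pmf.prob J (S1 v)" for v
  proof -
    have "ennreal (measure_pmf.prob J (S1 v)) = emeasure J (S1 v)"
      by (simp add: measure_pmf.emeasure_eq_measure)
    also have "\<dots> = (\<integral>\<^sup>+w. \<integral>\<^sup>+u. ennreal (if w \<in> F \<and> tp w u v then pmf (ch w u) v else 0) \<partial>PU w \<partial>PW)"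
      unfolding J_def S1_def by (rule emeasure_joint_slice)
    also have "\<dots> = (\<integral>\<^sup>+w. (if w \<in> F then \<integral>\<^sup>+u. ennreal (if tp w u v then pmf (ch w u) v else 0) \<partial>PU w else 0) \<partial>PW)"
      by (rule nn_integral_cong) auto
    also have "\<dots> = (\<Sum>w\<in>F. (\<integral>\<^sup>+u. ennreal (if tp w u v then pmf (ch w u) v else 0) \<partial>PU w) * pmf PW w)"
      by (rule nn_F[OF F(1)])
    also have "\<dots> = (\<Sum>w\<in>F. ennreal (measure_pmf.expectation (PU w) (a v w)))"
      by (simp add: aE)
    also have "\<dots> = ennreal (m v)"
      unfolding m_def
      by (rule sum_ennreal) (auto intro!: Bochner_Integration.integral_nonneg simp: a0)
    finally show ?thesis using m0[of v] by (metis ennreal_inj measure_nonneg)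
  qed
  have Q_split: "pmf Q v = m v + measure_pmf.prob J (S2 v)" for v
  proof -
    have "pmf Q v = measure_pmf.prob J {(w,u,v'). v' = v}"
      unfolding Q_def J_def by (rule pmf_target_joint)
    also have "{(w,u,v'). v' = v} = S1 v \<union> S2 v" unfolding S1_def S2_def by auto
    also have "measure_pmf.prob J (S1 v \<union> S2 v) = measure_pmf.prob J (S1 v) + measure_pmf.prob J (S2 v)"
      by (rule measure_pmf.finite_measure_Union) (auto simp: S1_def S2_def)
    finally show ?thesis by (simp add: m_eq)
  qed
  have r_sum: "(\<Sum>v\<in>Vs. measure_pmf.prob J (S2 v)) \<le> \<delta> + \<epsilon>"
  proof -
    have "(\<Sum>v\<in>Vs. measure_pmf.prob J (S2 v)) = measure_pmf.prob J (\<Union>v\<in>Vs. S2 v)"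
      by (rule measure_pmf.finite_measure_finite_Union[symmetric]) (auto simp: Vs(1) S2_def disjoint_family_on_def)
    also have "\<dots> \<le> measure_pmf.prob J ({x. fst x \<notin> F} \<union> {(w,u,v). \<not> tp w u v})"
      by (rule measure_pmf.finite_measure_mono) (auto simp: S2_def)
    also have "\<dots> \<le> measure_pmf.prob J {x. fst x \<notin> F} + measure_pmf.prob J {(w,u,v). \<not> tp w u v}"
      by (rule measure_subadditive) (auto simp: measure_pmf.emeasure_eq_measure)
    also have "measure_pmf.prob J {x. fst x \<notin> F} = measure_pmf.prob PW (- F)"
    proof -
      have "measure_pmf.prob PW (- F) = measure_pmf.prob (map_pmf fst J) (- F)"
        unfolding J_def fst_joint ..
      also have "\<dots> = measure_pmf.prob J {x. fst x \<notin> F}" by (simp add: vimage_def)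
      finally show ?thesis ..
    qed
    also have "measure_pmf.prob J {(w,u,v). \<not> tp w u v} \<le> \<epsilon>"
    proof -
      have "measure_pmf.prob J {(w,u,v). \<not> tp w u v} = measure_pmf.prob J ({(w,u,v). \<not> tp w u v} \<inter> set_pmf J)"
        by (rule measure_Int_set_pmf[symmetric])
      also have "\<dots> \<le> \<epsilon>" unfolding \<epsilon>_def
      proof (rule measure_pmf.finite_measure_mono)
        show "{(w,u,v). \<not> tp w u v} \<inter> set_pmf J
          \<subseteq> {(w, u, v). info_dens_cond PW PU ch w u v - info_dens_src PW w > \<tau>}"
        proof clarsimp
          fix w u v assume nt: "\<not> tp w u v" and inJ: "(w, u, v) \<in> set_pmf J"
          have "w \<in> set_pmf PW" "u \<in> set_pmf (PU w)" "v \<in> set_pmf (ch w u)"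
            using inJ unfolding J_def joint_pmf_def by auto
          moreover have "v \<in> set_pmf Q"
            using inJ unfolding Q_def target_out_def J_def by force
          ultimately have pos: "0 < pmf PW w" "0 < pmf (ch w u) v" "0 < pmf Q v"
            by (auto simp: pmf_positive)
          have "2 powr \<tau> * pmf Q v < pmf PW w * pmf (ch w u) v"
            using nt unfolding tp_def \<kappa>_def by simp
          from log_gt[OF pos this]
          show "\<tau> < info_dens_cond PW PU ch w u v - info_dens_src PW w"
            unfolding info_dens_cond_def info_dens_src_def Q_def .
        qed
      qed simp
      finally show ?thesis .
    qed
    finally show ?thesis using F(2) by simp
  qed
  have XP: "X v c \<le> pmf (induced_out PW ch c) v" for v c
  proof -
    have "ennreal (X v c) = (\<Sum>w\<in>F. ennreal (a v w (c w)))"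
      unfolding X_def by (rule sum_ennreal[symmetric]) (simp add: a0)
    also have "\<dots> = (\<Sum>w\<in>F. ennreal (if tp w (c w) v then pmf (ch w (c w)) v else 0) * pmf PW w)"
      by (rule sum.cong) (auto simp: a_def ennreal_mult' mult.commute)
    also have "\<dots> = (\<integral>\<^sup>+w. (if w \<in> F then ennreal (if tp w (c w) v then pmf (ch w (c w)) v else 0) else 0) \<partial>PW)"
      by (rule nn_F[OF F(1), symmetric])
    also have "\<dots> \<le> (\<integral>\<^sup>+w. ennreal (pmf (ch w (c w)) v) \<partial>PW)"
      by (rule nn_integral_mono) auto
    also have "\<dots> = ennreal (pmf (induced_out PW ch c) v)" by (rule pmf_induced[symmetric])
    finally show ?thesis by (simp add: ennreal_le_iff)
  qed
  have pw: "tv_dist (induced_out PW ch c) Q \<le> (\<Sum>v\<in>Vs. \<bar>X v c - m v\<bar>) + ((\<Sum>v\<in>Vs. pmf Q v - m v) + \<delta>)" for c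
  proof -
    have "tv_dist (induced_out PW ch c) Q \<le> (\<Sum>v\<in>Vs. max 0 (pmf Q v - pmf (induced_out PW ch c) v)) + measure_pmf.prob Q (- Vs)"
      by (rule tv_le[OF Vs(1)])
    also have "(\<Sum>v\<in>Vs. max 0 (pmf Q v - pmf (induced_out PW ch c) v)) \<le> (\<Sum>v\<in>Vs. \<bar>X v c - m v\<bar> + (pmf Q v - m v))"
    proof (rule sum_mono)
      fix v
      have "X v c \<le> pmf (induced_out PW ch c) v" by (rule XP)
      moreover have "m v \<le> pmf Q v" using Q_split[of v] measure_nonneg[of "measure_pmf J" "S2 v"] by linarith
      ultimately show "max 0 (pmf Q v - pmf (induced_out PW ch c) v) \<le> \<bar>X v c - m v\<bar> + (pmf Q v - m v)"
        by linarith
    qed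
    finally show ?thesis using Vs(2) by (simp add: sum.distrib)
  qed
  have int_bd: "(\<integral>\<^sup>+ c. ennreal \<bar>X v c - m v\<bar> \<partial>codebook_measure PU) \<le> ennreal (sqrt \<kappa> * pmf Q v)" for v
  proof -
    have "(\<integral>\<^sup>+ c. ennreal \<bar>X v c - m v\<bar> \<partial>codebook_measure PU) \<le> ennreal (sqrt (\<kappa> * pmf Q v * m v))"
      unfolding codebook_measure_def X_def m_def
      by (rule core_PiM[OF F(1), of "a v"]) (auto intro: a0 aK)
    also have "sqrt (\<kappa> * pmf Q v * m v) \<le> sqrt (\<kappa> * pmf Q v * pmf Q v)"
      using Q_split[of v] measure_nonneg[of "measure_pmf J" "S2 v"] \<kappa>0 pmf_nonneg[of Q v]
      by (intro real_sqrt_le_mono mult_left_mono) auto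
    also have "\<dots> = sqrt \<kappa> * pmf Q v"
      using \<kappa>0 by (simp add: real_sqrt_mult)
    finally show ?thesis by (simp add: ennreal_leI)
  qed
  define C where "C = (\<Sum>v\<in>Vs. pmf Q v - m v) + \<delta>"
  have Cr: "(\<Sum>v\<in>Vs. pmf Q v - m v) = (\<Sum>v\<in>Vs. measure_pmf.prob J (S2 v))"
    by (rule sum.cong) (auto simp: Q_split)
  have C0: "0 \<le> C" unfolding C_def Cr using \<delta> sum_nonneg[of Vs "\<lambda>v. measure_pmf.prob J (S2 v)"] by simp
  have Cb: "C \<le> 2 * \<delta> + \<epsilon>" unfolding C_def Cr using r_sum by simp
  have Qs: "(\<Sum>v\<in>Vs. pmf Q v) \<le> 1"
    using measure_measure_pmf_finite[OF Vs(1), of Q] measure_pmf.prob_le_1[of Q Vs] by simp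
  have meas: "(\<lambda>c. ennreal \<bar>X v c - m v\<bar>) \<in> borel_measurable (codebook_measure PU)" for v
    unfolding codebook_measure_def X_def by (rule meas_abs_sum)
  have "(\<integral>\<^sup>+ c. ennreal (tv_dist (induced_out PW ch c) (target_out PW PU ch)) \<partial>codebook_measure PU)
      \<le> (\<integral>\<^sup>+ c. (\<Sum>v\<in>Vs. ennreal \<bar>X v c - m v\<bar>) + ennreal C \<partial>codebook_measure PU)"
  proof (rule nn_integral_mono)
    fix c
    have "ennreal (tv_dist (induced_out PW ch c) (target_out PW PU ch)) \<le> ennreal ((\<Sum>v\<in>Vs. \<bar>X v c - m v\<bar>) + C)"
      using pw[of c] unfolding Q_def C_def by (rule ennreal_leI)
    also have "\<dots> = (\<Sum>v\<in>Vs. ennreal \<bar>X v c - m v\<bar>) + ennreal C"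
      using C0 by (simp add: sum_nonneg)
    finally show "ennreal (tv_dist (induced_out PW ch c) (target_out PW PU ch)) \<le> (\<Sum>v\<in>Vs. ennreal \<bar>X v c - m v\<bar>) + ennreal C" .
  qed
  also have "\<dots> = (\<Sum>v\<in>Vs. \<integral>\<^sup>+ c. ennreal \<bar>X v c - m v\<bar> \<partial>codebook_measure PU) + ennreal C"
  proof -
    have sm: "(\<lambda>c. \<Sum>v\<in>Vs. ennreal \<bar>X v c - m v\<bar>) \<in> borel_measurable (codebook_measure PU)"
      by (rule borel_measurable_sum) (rule meas)
    have "(\<integral>\<^sup>+ c. (\<Sum>v\<in>Vs. ennreal \<bar>X v c - m v\<bar>) + ennreal C \<partial>codebook_measure PU)
        = (\<integral>\<^sup>+ c. (\<Sum>v\<in>Vs. ennreal \<bar>X v c - m v\<bar>) \<partial>codebook_measure PU) + (\<integral>\<^sup>+ c. ennreal C \<partial>codebook_measure PU)"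
      by (rule nn_integral_add[OF sm]) simp
    also have "(\<integral>\<^sup>+ c. (\<Sum>v\<in>Vs. ennreal \<bar>X v c - m v\<bar>) \<partial>codebook_measure PU)
        = (\<Sum>v\<in>Vs. \<integral>\<^sup>+ c. ennreal \<bar>X v c - m v\<bar> \<partial>codebook_measure PU)"
      by (rule nn_integral_sum) (rule meas)
    also have "(\<integral>\<^sup>+ c. ennreal C \<partial>codebook_measure PU) = ennreal C"
      using prob_space.emeasure_space_1[OF codebook_prob[of PU]] by simp
    finally show ?thesis .
  qed
  also have "\<dots> \<le> (\<Sum>v\<in>Vs. ennreal (sqrt \<kappa> * pmf Q v)) + ennreal C"
    by (intro add_mono sum_mono int_bd order_refl)
  also have "\<dots> = ennreal (sqrt \<kappa> * (\<Sum>v\<in>Vs. pmf Q v) + C)"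
    using \<kappa>0 C0 by (simp add: sum_distrib_left sum_nonneg)
  also have "\<dots> \<le> ennreal (\<epsilon> + 2 * \<delta> + sqrt \<kappa>)"
  proof (rule ennreal_leI)
    have "sqrt \<kappa> * (\<Sum>v\<in>Vs. pmf Q v) \<le> sqrt \<kappa> * 1"
      using Qs \<kappa>0 by (intro mult_left_mono) auto
    then show "sqrt \<kappa> * (\<Sum>v\<in>Vs. pmf Q v) + C \<le> \<epsilon> + 2 * \<delta> + sqrt \<kappa>" using Cb by linarith
  qed
  finally show ?thesis unfolding \<epsilon>_def J_def \<kappa>_def .
qed


theorem mainTheorem11:
  fixes PW :: "nat \<Rightarrow> 'w::countable pmf"
    and PU :: "nat \<Rightarrow> 'w \<Rightarrow> 'u::countable pmf"
    and ch :: "nat \<Rightarrow> 'w \<Rightarrow> 'u \<Rightarrow> 'v::countable pmf"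
  assumes hyp: "\<And>\<tau>::real. (\<lambda>n. measure_pmf.prob (joint_pmf (PW n) (PU n) (ch n))
        {(w, u, v). info_dens_cond (PW n) (PU n) (ch n) w u v - info_dens_src (PW n) w > \<tau>})
      \<longlonglongrightarrow> 0"
  shows "(\<lambda>n. \<integral>\<^sup>+ c. ennreal (tv_dist (induced_out (PW n) (ch n) c)
                                    (target_out (PW n) (PU n) (ch n)))
              \<partial>(codebook_measure (PU n))) \<longlonglongrightarrow> 0"
proof (rule order_tendstoI)
  fix y :: ennreal assume "y < 0" then show "\<forall>\<^sub>F n in sequentially. y < (\<integral>\<^sup>+ c. ennreal (tv_dist (induced_out (PW n) (ch n) c)
                                    (target_out (PW n) (PU n) (ch n)))
              \<partial>(codebook_measure (PU n)))" by simp
next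
  fix u :: ennreal assume u: "0 < u"
  obtain r :: ennreal where r: "0 < r" "r < u" using dense[OF u] by blast
  define e where "e = enn2real r"
  have rne: "r \<noteq> \<infinity>" using r(2) by auto
  have re: "r = ennreal e" unfolding e_def using rne by (simp add: ennreal_enn2real_if)
  have e0: "0 < e" using r(1) rne unfolding e_def by (simp add: enn2real_positive_iff less_top)
  define \<tau> where "\<tau> = log 2 ((e/4)^2)"
  have sq: "sqrt (2 powr \<tau>) = e/4" unfolding \<tau>_def using e0 by simp
  have ev: "eventually (\<lambda>n. measure_pmf.prob (joint_pmf (PW n) (PU n) (ch n))
        {(w, u, v). info_dens_cond (PW n) (PU n) (ch n) w u v - info_dens_src (PW n) w > \<tau>} < e/4) sequentially"
    using order_tendstoD(2)[OF hyp[of \<tau>], of "e/4"] e0 by simp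
  show "eventually (\<lambda>n. (\<integral>\<^sup>+ c. ennreal (tv_dist (induced_out (PW n) (ch n) c)
                                    (target_out (PW n) (PU n) (ch n)))
              \<partial>(codebook_measure (PU n))) < u) sequentially"
    using ev
  proof eventually_elim
    case (elim n)
    have "(\<integral>\<^sup>+ c. ennreal (tv_dist (induced_out (PW n) (ch n) c)
                                    (target_out (PW n) (PU n) (ch n)))
              \<partial>(codebook_measure (PU n)))
       \<le> ennreal (measure_pmf.prob (joint_pmf (PW n) (PU n) (ch n))
          {(w, u, v). info_dens_cond (PW n) (PU n) (ch n) w u v - info_dens_src (PW n) w > \<tau>} + 2 * (e/8) + sqrt (2 powr \<tau>))"
      by (rule bound_n) (use e0 in simp)
    also have "\<dots> < ennreal e"
      using elim e0 sq by (intro ennreal_lessI) auto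
    also have "\<dots> < u" using r re by simp
    finally show ?case .
  qed
qed

end
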